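(* Let $f:\mathbb{Z}\to\mathbb{R}^{+}$ be a function such that $\|f'\|_{\infty}<\infty$ and $\widetilde{M}f$ is not identically $+\infty$. Then $\widetilde{M}f(n)<\infty$ for all $n\in\mathbb{Z}$.
   Context: For $f:\mathbb{Z}\to\mathbb{R}$, the uncentered discrete Hardy–Littlewood maximal function is $\widetilde{M}f(n)=\sup_{r,s\in\mathbb{Z}_{\ge 0}}\frac{1}{r+s+1}\sum_{k=-s}^{r}|f(n+k)|$ (possibly $+\infty$). For $g:\mathbb{Z}\to\mathbb{R}$, $g'(n)=g(n+1)-g(n)$ and $\|g\|_\infty=\sup_{n\in\mathbb{Z}}|g(n)|$. *)

theory Defs
  imports "HOL-Analysis.Analysis"
begin

definition unc_max :: "(int \<Rightarrow> real) \<Rightarrow> int \<Rightarrow> ereal" where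
  "unc_max f n = (SUP rs \<in> (UNIV :: (nat \<times> nat) set).
     ereal ((\<Sum>k = - int (snd rs) .. int (fst rs). \<bar>f (n + k)\<bar>) / real (fst rs + snd rs + 1)))"

definition ddiff :: "(int \<Rightarrow> real) \<Rightarrow> int \<Rightarrow> real" where
  "ddiff g n = g (n + 1) - g n"

end

theory Submission
  imports Defs
begin

lemma shift_sum:
  fixes g :: "int \<Rightarrow> real"
  shows "(\<Sum>k = a .. b. g (n + k)) = (\<Sum>j = n + a .. n + b. g j)"
proof -
  have "(\<lambda>k. n + k) ` {a..b} = {n+a..n+b}"
  proof
    show "{n+a..n+b} \<subseteq> (\<lambda>k. n + k) ` {a..b}"
    proof
      fix x assume "x \<in> {n+a..n+b}"
      then show "x \<in> (\<lambda>k. n + k) ` {a..b}" by (intro image_eqI[of _ _ "x - n"]) auto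
    qed
  qed auto
  moreover have "inj_on (\<lambda>k. n + k) {a..b}" by (auto simp: inj_on_def)
  ultimately show ?thesis using sum.reindex[of "\<lambda>k. n + k" "{a..b}" g] by (simp add: comp_def add.commute)
qed

lemma window_le:
  fixes f :: "int \<Rightarrow> real"
  assumes "(r, s) \<in> (UNIV :: (nat \<times> nat) set)"
  shows "ereal ((\<Sum>k = - int s .. int r. \<bar>f (n + k)\<bar>) / real (r + s + 1)) \<le> unc_max f n"
  unfolding unc_max_def by (rule SUP_upper2[of "(r,s)"]) auto

theorem lemma5p3:
  fixes f :: "int \<Rightarrow> real"
  assumes pos: "\<And>n. f n > 0"
    and lip: "bdd_above (range (\<lambda>n. \<bar>ddiff f n\<bar>))"
    and notinf: "\<exists>n. unc_max f n \<noteq> \<infinity>"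
  shows "\<forall>n. unc_max f n < \<infinity>"
proof
  fix n
  obtain n0 where n0: "unc_max f n0 \<noteq> \<infinity>" using notinf by blast
  have "ereal ((\<Sum>k = - int 0 .. int 0. \<bar>f (n0 + k)\<bar>) / real (0 + 0 + 1)) \<le> unc_max f n0"
    by (rule window_le) auto
  then have "unc_max f n0 \<noteq> -\<infinity>" by auto
  with n0 obtain B where B: "unc_max f n0 = ereal B" by (cases "unc_max f n0") auto
  have B0: "B \<ge> 0"
  proof -
    have "ereal ((\<Sum>k = - int 0 .. int 0. \<bar>f (n0 + k)\<bar>) / real (0 + 0 + 1)) \<le> ereal B"
      using window_le[of 0 0 f n0] B by auto
    then show ?thesis by (simp add: order_trans[OF abs_ge_zero])
  qed
  have key: "(\<Sum>j = a .. b. \<bar>f j\<bar>) \<le> B * (b - a + 1)" if "a \<le> n0" "n0 \<le> b" for a b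
  proof -
    define r where "r = nat (b - n0)"
    define s where "s = nat (n0 - a)"
    have "ereal ((\<Sum>k = - int s .. int r. \<bar>f (n0 + k)\<bar>) / real (r + s + 1)) \<le> ereal B"
      using window_le[of r s f n0] B by auto
    then have "(\<Sum>k = - int s .. int r. \<bar>f (n0 + k)\<bar>) / real (r + s + 1) \<le> B" by simp
    then have "(\<Sum>k = - int s .. int r. \<bar>f (n0 + k)\<bar>) \<le> B * real (r + s + 1)"
      by (simp add: divide_le_eq mult.commute)
    moreover have "(\<Sum>k = - int s .. int r. \<bar>f (n0 + k)\<bar>) = (\<Sum>j = a .. b. \<bar>f j\<bar>)"
      using shift_sum[where g="\<lambda>j. \<bar>f j\<bar>" and a="- int s" and b="int r" and n=n0] that by (simp add: r_def s_def)
    moreover have "real (r + s + 1) = real_of_int (b - a + 1)" using that by (simp add: r_def s_def)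
    ultimately show ?thesis by (simp add: add.commute)
  qed
  define d where "d = real_of_int \<bar>n - n0\<bar>"
  have "unc_max f n \<le> ereal (B * (1 + d))"
    unfolding unc_max_def
  proof (rule SUP_least, clarify)
    fix r s :: nat
    define a where "a = n - int s"
    define b where "b = n + int r"
    define a' where "a' = min a n0"
    define b' where "b' = max b n0"
    have L: "real (r + s + 1) = real_of_int (b - a + 1)" by (simp add: a_def b_def)
    have S: "(\<Sum>k = - int s .. int r. \<bar>f (n + k)\<bar>) = (\<Sum>j = a .. b. \<bar>f j\<bar>)"
      using shift_sum[where g="\<lambda>j. \<bar>f j\<bar>" and a="- int s" and b="int r" and n=n] by (simp add: a_def b_def)
    have "(\<Sum>j = a .. b. \<bar>f j\<bar>) \<le> (\<Sum>j = a' .. b'. \<bar>f j\<bar>)"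
      by (rule sum_mono2) (auto simp: a'_def b'_def)
    also have "\<dots> \<le> B * (b' - a' + 1)" by (rule key) (auto simp: a'_def b'_def)
    also have "\<dots> \<le> B * ((b - a + 1) + d)"
      using B0 by (intro mult_left_mono) (auto simp: a'_def b'_def d_def a_def b_def)
    also have "\<dots> \<le> B * ((b - a + 1) * (1 + d))"
      using B0 by (intro mult_left_mono) (auto simp: d_def a_def b_def algebra_simps)
    finally have "(\<Sum>j = a .. b. \<bar>f j\<bar>) / real_of_int (b - a + 1) \<le> B * (1 + d)"
      by (simp add: divide_le_eq a_def b_def algebra_simps)
    then show "ereal ((\<Sum>k = - int (snd (r, s)) .. int (fst (r, s)). \<bar>f (n + k)\<bar>) / real (fst (r, s) + snd (r, s) + 1)) \<le> ereal (B * (1 + d))"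
      using S L by (simp add: add.commute)
  qed
  then show "unc_max f n < \<infinity>" by (auto simp: le_less_trans)
qed

end
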